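(* Let $P$ be a special product rule, $\Sigma$ a finite alphabet, $\mathcal A=\langle X,F,\Delta\rangle$ a polynomial $P$-automaton with finite $X$, and $x_1\in X$. For $n\in\mathbb N$ let $I_n\subseteq\mathbb Q[X]$ be the polynomial ideal generated by $\{\tilde\Delta_wx_1: w\in\Sigma^*, |w|\le n\}$ (note $I_n\subseteq\mathbb Q_0[X]$). Then for all $n$: (1) $I_n\subseteq I_{n+1}$; (2) $\tilde\Delta_a(I_n)\subseteq I_{n+1}$ for every $a\in\Sigma$; (3) $I_{n+1}=I_n+\langle\tilde\Delta_a(I_n): a\in\Sigma\rangle$, where $\langle S\rangle$ is the ideal generated by $S$; (4) if $I_n=I_{n+1}$ then $I_n=I_{n+m}$ for all $m\ge0$.
   Context: $\mathbb Q_0[X]$ is the set of polynomials of $\mathbb Q[X]$ with zero constant term. Terms over $X$ are generated by $u,v::=x\mid 0\mid c\cdot u\mid u+v\mid u*v$; a product rule is a term $P$ over $\{x,\dot x,y,\dot y\}$. $u\approx v$ iff $u,v$ denote the same polynomial. $P$ is special if $P(x+y,\dot x+\dot y,z,\dot z)\approx P(x,\dot x,z,\dot z)+P(y,\dot y,z,\dot z)$, $P(x,\dot x,y*z,P(y,\dot y,z,\dot z))\approx P(x*y,P(x,\dot x,y,\dot y),z,\dot z)$, $P(x,\dot x,y,\dot y)\approx P(y,\dot y,x,\dot x)$. For special $P$, every $D:X\to\mathbb Q_0[X]$ has a unique $\mathbb Q$-linear extension $\tilde D:\mathbb Q_0[X]\to\mathbb Q_0[X]$ with $\tilde Dx=Dx$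 and $\tilde D(\alpha\beta)=P(\alpha,\tilde D\alpha,\beta,\tilde D\beta)$. A polynomial $P$-automaton is $\mathcal A=\langle X,F,\Delta\rangle$ with $F:X\to\mathbb Q$ and $\Delta_a:X\to\mathbb Q_0[X]$ for $a\in\Sigma$. For words, $\tilde\Delta_\varepsilon\alpha=\alpha$ and $\tilde\Delta_{aw}\alpha=\tilde\Delta_w(\tilde\Delta_a\alpha)$. *)

theory Defs
  imports Complex_Main "HOL-Library.Poly_Mapping"
begin

text \<open>Polynomials in variables of type 'v with rational coefficients:
  finitely supported maps from monomials (exponent vectors) to coefficients.\<close>
type_synonym 'v mpoly = "('v \<Rightarrow>\<^sub>0 nat) \<Rightarrow>\<^sub>0 rat"

definition PVar :: "'v \<Rightarrow> 'v mpoly" where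
  "PVar x = Poly_Mapping.single (Poly_Mapping.single x 1) 1"

definition PConst :: "rat \<Rightarrow> 'v mpoly" where
  "PConst c = Poly_Mapping.single 0 c"

definition Q0 :: "'v mpoly set" where
  "Q0 = {p. Poly_Mapping.lookup p 0 = 0}"

datatype 'v trm = TVar 'v | TZero | TScal rat "'v trm" | TAdd "'v trm" "'v trm" | TMul "'v trm" "'v trm"

primrec tsem :: "('v \<Rightarrow> 'w mpoly) \<Rightarrow> 'v trm \<Rightarrow> 'w mpoly" where
  "tsem \<rho> (TVar x) = \<rho> x"
| "tsem \<rho> TZero = 0"
| "tsem \<rho> (TScal c u) = PConst c * tsem \<rho> u"
| "tsem \<rho> (TAdd u v) = tsem \<rho> u + tsem \<rho> v"
| "tsem \<rho> (TMul u v) = tsem \<rho> u * tsem \<rho> v"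

text \<open>Variables of a product rule: x, x-dot, y, y-dot.\<close>
datatype pv = Px | Pdx | Py | Pdy

type_synonym prule = "pv trm"

definition papp :: "prule \<Rightarrow> 'w mpoly \<Rightarrow> 'w mpoly \<Rightarrow> 'w mpoly \<Rightarrow> 'w mpoly \<Rightarrow> 'w mpoly" where
  "papp P a da b db = tsem (\<lambda>v. case v of Px \<Rightarrow> a | Pdx \<Rightarrow> da | Py \<Rightarrow> b | Pdy \<Rightarrow> db) P"

datatype sv = Sx | Sdx | Sy | Sdy | Sz | Sdz

definition special :: "prule \<Rightarrow> bool" where
  "special P \<longleftrightarrow>
     papp P (PVar Sx + PVar Sy) (PVar Sdx + PVar Sdy) (PVar Sz) (PVar Sdz)
       = papp P (PVar Sx) (PVar Sdx) (PVar Sz) (PVar Sdz) + papp P (PVar Sy) (PVar Sdy) (PVar Sz) (PVar Sdz)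
   \<and> papp P (PVar Sx) (PVar Sdx) (PVar Sy * PVar Sz) (papp P (PVar Sy) (PVar Sdy) (PVar Sz) (PVar Sdz))
       = papp P (PVar Sx * PVar Sy) (papp P (PVar Sx) (PVar Sdx) (PVar Sy) (PVar Sdy)) (PVar Sz) (PVar Sdz)
   \<and> papp P (PVar Sx) (PVar Sdx) (PVar Sy) (PVar Sdy) = papp P (PVar Sy) (PVar Sdy) (PVar Sx) (PVar Sdx)"

definition is_ext :: "prule \<Rightarrow> ('x \<Rightarrow> 'x mpoly) \<Rightarrow> ('x mpoly \<Rightarrow> 'x mpoly) \<Rightarrow> bool" where
  "is_ext P D Dt \<longleftrightarrow>
     (\<forall>\<alpha>\<in>Q0. Dt \<alpha> \<in> Q0)
   \<and> (\<forall>\<alpha>\<in>Q0. \<forall>\<beta>\<in>Q0. \<forall>c. Dt (PConst c * \<alpha> + \<beta>) = PConst c * Dt \<alpha> + Dt \<beta>)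
   \<and> (\<forall>x. Dt (PVar x) = D x)
   \<and> (\<forall>\<alpha>\<in>Q0. \<forall>\<beta>\<in>Q0. Dt (\<alpha> * \<beta>) = papp P \<alpha> (Dt \<alpha>) \<beta> (Dt \<beta>))"

fun dword :: "('a \<Rightarrow> 'x mpoly \<Rightarrow> 'x mpoly) \<Rightarrow> 'a list \<Rightarrow> 'x mpoly \<Rightarrow> 'x mpoly" where
  "dword Dt [] \<alpha> = \<alpha>"
| "dword Dt (a # w) \<alpha> = dword Dt w (Dt a \<alpha>)"

definition is_ideal :: "'x mpoly set \<Rightarrow> bool" where
  "is_ideal I \<longleftrightarrow> 0 \<in> I \<and> (\<forall>p\<in>I. \<forall>q\<in>I. p + q \<in> I) \<and> (\<forall>r. \<forall>p\<in>I. r * p \<in> I)"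

definition ideal_gen :: "'x mpoly set \<Rightarrow> 'x mpoly set" where
  "ideal_gen S = \<Inter>{I. is_ideal I \<and> S \<subseteq> I}"

definition In :: "('a \<Rightarrow> 'x mpoly \<Rightarrow> 'x mpoly) \<Rightarrow> 'x \<Rightarrow> nat \<Rightarrow> 'x mpoly set" where
  "In Dt x1 n = ideal_gen {dword Dt w (PVar x1) | w. length w \<le> n}"

end

theory Submission
  imports Defs
begin

lemma a0: "(l::'v \<Rightarrow>\<^sub>0 nat) + q = 0 \<longleftrightarrow> l = 0 \<and> q = 0"
proof
  assume h: "l + q = 0"
  have "\<And>k. Poly_Mapping.lookup l k = 0 \<and> Poly_Mapping.lookup q k = 0"
  proof -
    fix k
    have "Poly_Mapping.lookup l k + Poly_Mapping.lookup q k = 0"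
      using h by (metis lookup_add lookup_zero)
    then show "Poly_Mapping.lookup l k = 0 \<and> Poly_Mapping.lookup q k = 0" by simp
  qed
  then show "l = 0 \<and> q = 0" by (auto intro: poly_mapping_eqI)
qed simp

lemma lm0: "Poly_Mapping.lookup ((f::('v \<Rightarrow>\<^sub>0 nat) \<Rightarrow>\<^sub>0 rat) * g) 0
   = Poly_Mapping.lookup f 0 * Poly_Mapping.lookup g 0"
proof -
  have i: "Sum_any (\<lambda>q. Poly_Mapping.lookup g q when 0 = l + q)
     = (if l = 0 then Poly_Mapping.lookup g 0 else 0)" for l :: "'v \<Rightarrow>\<^sub>0 nat"
  proof (cases "l = 0")
    case True
    have "(\<lambda>q. Poly_Mapping.lookup g q when 0 = l + q)
       = (\<lambda>q. if q = 0 then Poly_Mapping.lookup g q else 0)"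
      using True by (auto simp: when_def fun_eq_iff)
    then show ?thesis using True by simp
  next
    case False
    have "(\<lambda>q. Poly_Mapping.lookup g q when 0 = l + q) = (\<lambda>q. 0)"
      using False a0[of l] by (auto simp: when_def fun_eq_iff)
    then show ?thesis using False by (simp only: Sum_any.neutral if_False)
  qed
  have "Poly_Mapping.lookup (f * g) 0
     = Sum_any (\<lambda>l. Poly_Mapping.lookup f l * (if l = 0 then Poly_Mapping.lookup g 0 else 0))"
    by (simp only: lookup_mult i)
  also have "\<dots> = Sum_any (\<lambda>l. if l = 0 then Poly_Mapping.lookup f l * Poly_Mapping.lookup g 0 else 0)"
    by (rule arg_cong[where f=Sum_any]) (auto simp: fun_eq_iff)
  also have "\<dots> = Poly_Mapping.lookup f 0 * Poly_Mapping.lookup g 0" by simp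
  finally show ?thesis .
qed

lemma Q0_mult: "q \<in> Q0 \<Longrightarrow> (r::'v mpoly) * q \<in> Q0"
  by (simp add: Q0_def lm0)

lemma Q0_add: "p \<in> Q0 \<Longrightarrow> q \<in> Q0 \<Longrightarrow> (p::'v mpoly) + q \<in> Q0"
  by (simp add: Q0_def lookup_add)

lemma Q0_zero: "0 \<in> Q0"
  by (simp add: Q0_def)

lemma PVar_Q0: "PVar x \<in> Q0"
proof -
  have "Poly_Mapping.single x (1::nat) \<noteq> 0" by (metis lookup_single_eq lookup_zero one_neq_zero)
  then have "Poly_Mapping.lookup (Poly_Mapping.single (Poly_Mapping.single x (1::nat)) (1::rat)) 0 = 0"
    by (rule lookup_single_not_eq)
  then show ?thesis by (simp add: Q0_def PVar_def)
qed

lemma PConst_lookup: "Poly_Mapping.lookup (PConst c) 0 = c"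
  by (simp add: PConst_def)

lemma PConst_one: "PConst 1 = 1"
  by (simp add: PConst_def one_poly_mapping.abs_eq single.abs_eq)

lemma decomp: "(r::'v mpoly) = PConst (Poly_Mapping.lookup r 0) + (r - PConst (Poly_Mapping.lookup r 0))
   \<and> r - PConst (Poly_Mapping.lookup r 0) \<in> Q0"
  by (simp add: Q0_def lookup_minus PConst_lookup)

lemma ideal_gen_ideal: "is_ideal (ideal_gen S)"
  unfolding is_ideal_def ideal_gen_def by blast

lemma ideal_gen_sub: "S \<subseteq> ideal_gen S"
  unfolding ideal_gen_def by blast

lemma ideal_gen_least: "is_ideal I \<Longrightarrow> S \<subseteq> I \<Longrightarrow> ideal_gen S \<subseteq> I"
  unfolding ideal_gen_def by blast

lemma ideal_gen_mono: "S \<subseteq> T \<Longrightarrow> ideal_gen S \<subseteq> ideal_gen T"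
  by (meson ideal_gen_ideal ideal_gen_least ideal_gen_sub order_trans)

lemma ideal_0: "is_ideal I \<Longrightarrow> 0 \<in> I" by (simp add: is_ideal_def)
lemma ideal_add: "is_ideal I \<Longrightarrow> p \<in> I \<Longrightarrow> q \<in> I \<Longrightarrow> p + q \<in> I" by (simp add: is_ideal_def)
lemma ideal_mult: "is_ideal I \<Longrightarrow> p \<in> I \<Longrightarrow> r * p \<in> I" by (simp add: is_ideal_def)
lemma ideal_neg: "is_ideal I \<Longrightarrow> p \<in> I \<Longrightarrow> - (p::'v mpoly) \<in> I"
  using ideal_mult[of I p "-1"] by simp
lemma ideal_diff: "is_ideal I \<Longrightarrow> p \<in> I \<Longrightarrow> q \<in> I \<Longrightarrow> (p::'v mpoly) - q \<in> I"
  using ideal_add[of I p "-q"] ideal_neg[of I q] by simp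

lemma tsem_diff:
  assumes "is_ideal I" "\<And>v. \<rho> v - \<rho>' v \<in> I"
  shows "tsem \<rho> t - tsem \<rho>' t \<in> (I :: 'w mpoly set)"
proof (induction t)
  case (TVar x) then show ?case using assms by simp
next
  case TZero then show ?case using assms ideal_0 by simp
next
  case (TScal c u)
  have "tsem \<rho> (TScal c u) - tsem \<rho>' (TScal c u) = PConst c * (tsem \<rho> u - tsem \<rho>' u)"
    by (simp add: algebra_simps)
  then show ?case using TScal assms ideal_mult by metis
next
  case (TAdd u v)
  have "tsem \<rho> (TAdd u v) - tsem \<rho>' (TAdd u v) = (tsem \<rho> u - tsem \<rho>' u) + (tsem \<rho> v - tsem \<rho>' v)"
    by (simp add: algebra_simps)
  then show ?case using TAdd assms ideal_add by metis
next
  case (TMul u v)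
  have "tsem \<rho> (TMul u v) - tsem \<rho>' (TMul u v)
     = tsem \<rho> u * (tsem \<rho> v - tsem \<rho>' v) + tsem \<rho>' v * (tsem \<rho> u - tsem \<rho>' u)"
    by (simp add: algebra_simps)
  then show ?case using TMul assms ideal_add ideal_mult by metis
qed

lemma papp_diff:
  assumes "is_ideal I" "b \<in> I" "db \<in> I"
  shows "papp P a da b db - papp P a da 0 0 \<in> I"
  unfolding papp_def
  by (rule tsem_diff[OF assms(1)]) (auto split: pv.split simp: assms ideal_0)

lemma dword_snoc: "dword Dt (w @ [a]) \<alpha> = Dt a (dword Dt w \<alpha>)"
  by (induction w arbitrary: \<alpha>) auto

lemma dword_Q0:
  assumes "\<forall>a. \<forall>\<alpha>\<in>Q0. Dt a \<alpha> \<in> Q0"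
  shows "\<alpha> \<in> Q0 \<Longrightarrow> dword Dt w \<alpha> \<in> Q0"
  using assms by (induction w arbitrary: \<alpha>) auto

lemma ext_zero:
  assumes "is_ext P D Dt1"
  shows "Dt1 0 = 0"
proof -
  have "Dt1 (PConst 1 * 0 + 0) = PConst 1 * Dt1 0 + Dt1 0"
    using assms Q0_zero unfolding is_ext_def by blast
  then show ?thesis by (simp add: PConst_one)
qed

lemma ext_add:
  assumes "is_ext P D Dt1" "p \<in> Q0" "q \<in> Q0"
  shows "Dt1 (p + q) = Dt1 p + Dt1 q"
proof -
  have "Dt1 (PConst 1 * p + q) = PConst 1 * Dt1 p + Dt1 q"
    using assms unfolding is_ext_def by blast
  then show ?thesis by (simp add: PConst_one)
qed

lemma ext_mult_ideal:
  assumes "is_ext P D Dt1" "is_ideal I" "q \<in> Q0" "q \<in> I" "Dt1 q \<in> I"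
  shows "Dt1 (r * q) \<in> I"
proof -
  define c where "c = Poly_Mapping.lookup r 0"
  define r0 where "r0 = r - PConst c"
  have r: "r = PConst c + r0" and r0: "r0 \<in> Q0" using decomp[of r] by (auto simp: c_def r0_def)
  have e: "r * q = PConst c * q + r0 * q" by (simp add: r algebra_simps)
  have "Dt1 (r * q) = PConst c * Dt1 q + Dt1 (r0 * q)"
    unfolding e using assms(1,3) Q0_mult[OF assms(3), of r0] unfolding is_ext_def by blast
  moreover have m: "Dt1 (r0 * q) = papp P r0 (Dt1 r0) q (Dt1 q)"
    using assms(1,3) r0 unfolding is_ext_def by blast
  moreover have "papp P r0 (Dt1 r0) 0 0 = 0"
  proof -
    have "Dt1 (r0 * 0) = papp P r0 (Dt1 r0) 0 (Dt1 0)"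
      using assms(1) r0 Q0_zero unfolding is_ext_def by blast
    then show ?thesis using ext_zero[OF assms(1)] by simp
  qed
  ultimately have "Dt1 (r * q) = PConst c * Dt1 q + (papp P r0 (Dt1 r0) q (Dt1 q) - papp P r0 (Dt1 r0) 0 0)"
    by simp
  then show ?thesis
    using papp_diff[OF assms(2,4,5)] assms(2,5) ideal_add ideal_mult by metis
qed

theorem mainTheorem13:
  fixes P :: prule
    and F :: "'x::finite \<Rightarrow> rat"
    and \<Delta> :: "'a::finite \<Rightarrow> 'x \<Rightarrow> 'x mpoly"
    and Dt :: "'a \<Rightarrow> 'x mpoly \<Rightarrow> 'x mpoly"
    and x1 :: 'x
  assumes "special P"
    and "\<forall>a x. \<Delta> a x \<in> Q0"
    and "\<forall>a. is_ext P (\<Delta> a) (Dt a)"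
  shows "\<forall>n. In Dt x1 n \<subseteq> In Dt x1 (Suc n)
          \<and> (\<forall>a. Dt a ` In Dt x1 n \<subseteq> In Dt x1 (Suc n))
          \<and> In Dt x1 (Suc n) = {p + q | p q. p \<in> In Dt x1 n \<and> q \<in> ideal_gen (\<Union>a. Dt a ` In Dt x1 n)}
          \<and> (In Dt x1 n = In Dt x1 (Suc n) \<longrightarrow> (\<forall>m. In Dt x1 n = In Dt x1 (n + m)))"
proof -
  have ext: "\<And>a. is_ext P (\<Delta> a) (Dt a)" using assms(3) by blast
  have DQ0: "\<forall>a. \<forall>\<alpha>\<in>Q0. Dt a \<alpha> \<in> Q0" using assms(3) unfolding is_ext_def by blast
  define G where "G n = {dword Dt w (PVar x1) | w. length w \<le> n}" for n
  have I_def: "In Dt x1 n = ideal_gen (G n)" for n by (simp add: In_def G_def)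
  have GQ0: "G n \<subseteq> Q0" for n
    using dword_Q0[OF DQ0 PVar_Q0] by (auto simp: G_def)
  have Iid: "is_ideal (In Dt x1 n)" for n by (simp add: I_def ideal_gen_ideal)
  have IQ0: "In Dt x1 n \<subseteq> Q0" for n
  proof -
    have "is_ideal Q0" unfolding is_ideal_def using Q0_zero Q0_add Q0_mult by blast
    then show ?thesis unfolding I_def using ideal_gen_least GQ0 by blast
  qed
  have mono: "In Dt x1 n \<subseteq> In Dt x1 (Suc n)" for n
    unfolding I_def by (rule ideal_gen_mono) (auto simp: G_def)
  have step: "Dt a ` In Dt x1 n \<subseteq> In Dt x1 (Suc n)" for a n
  proof -
    define J where "J = {q. q \<in> Q0 \<and> q \<in> In Dt x1 n \<and> Dt a q \<in> In Dt x1 (Suc n)}"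
    have "is_ideal J"
      unfolding is_ideal_def
    proof (intro conjI ballI allI)
      show "0 \<in> J" unfolding J_def using Q0_zero ideal_0[OF Iid] ext_zero[OF ext] by auto
    next
      fix p q assume "p \<in> J" "q \<in> J"
      then show "p + q \<in> J" unfolding J_def
        using Q0_add ideal_add[OF Iid] ext_add[OF ext] by auto
    next
      fix r p assume p: "p \<in> J"
      then have "p \<in> In Dt x1 (Suc n)" unfolding J_def using mono by blast
      then have "Dt a (r * p) \<in> In Dt x1 (Suc n)"
        using ext_mult_ideal[OF ext Iid] p unfolding J_def by blast
      then show "r * p \<in> J" using p Q0_mult ideal_mult[OF Iid] unfolding J_def by blast
    qed
    moreover have "G n \<subseteq> J"
    proof
      fix g assume g: "g \<in> G n"
      then obtain w where w: "g = dword Dt w (PVar x1)" "length w \<le> n" by (auto simp: G_def)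
      have "Dt a g = dword Dt (w @ [a]) (PVar x1)" by (simp add: w dword_snoc)
      then have "Dt a g \<in> G (Suc n)" using w by (auto simp: G_def)
      then have "Dt a g \<in> In Dt x1 (Suc n)" unfolding I_def using ideal_gen_sub by blast
      moreover have "g \<in> In Dt x1 n" unfolding I_def using g ideal_gen_sub by blast
      ultimately show "g \<in> J" using g GQ0 unfolding J_def by blast
    qed
    ultimately have "In Dt x1 n \<subseteq> J" unfolding I_def by (rule ideal_gen_least)
    then show ?thesis unfolding J_def by blast
  qed
  define K where "K n = ideal_gen (\<Union>a. Dt a ` In Dt x1 n)" for n
  have sum: "In Dt x1 (Suc n) = {p + q | p q. p \<in> In Dt x1 n \<and> q \<in> K n}" for n
  proof
    have KI: "K n \<subseteq> In Dt x1 (Suc n)" unfolding K_def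
      by (rule ideal_gen_least[OF Iid]) (use step in blast)
    show "{p + q | p q. p \<in> In Dt x1 n \<and> q \<in> K n} \<subseteq> In Dt x1 (Suc n)"
    proof
      fix x assume "x \<in> {p + q | p q. p \<in> In Dt x1 n \<and> q \<in> K n}"
      then obtain p q where pq: "x = p + q" "p \<in> In Dt x1 n" "q \<in> K n" by blast
      have "p \<in> In Dt x1 (Suc n)" using pq(2) mono by blast
      moreover have "q \<in> In Dt x1 (Suc n)" using pq(3) KI by blast
      ultimately show "x \<in> In Dt x1 (Suc n)" unfolding pq(1) by (rule ideal_add[OF Iid])
    qed
  next
    define S where "S = {p + q | p q. p \<in> In Dt x1 n \<and> q \<in> K n}"
    have Kid: "is_ideal (K n)" by (simp add: K_def ideal_gen_ideal)
    have Smem: "p + q \<in> S" if "p \<in> In Dt x1 n" "q \<in> K n" for p q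
      unfolding S_def using that by blast
    have "is_ideal S"
      unfolding is_ideal_def
    proof (intro conjI ballI allI)
      have "0 + 0 \<in> S" by (rule Smem[OF ideal_0[OF Iid] ideal_0[OF Kid]])
      then show "0 \<in> S" by simp
    next
      fix x y assume "x \<in> S" "y \<in> S"
      then obtain p q p' q' where h: "x = p + q" "y = p' + q'" "p \<in> In Dt x1 n" "p' \<in> In Dt x1 n"
        "q \<in> K n" "q' \<in> K n" unfolding S_def by blast
      have m: "(p + p') + (q + q') \<in> S"
        by (rule Smem[OF ideal_add[OF Iid h(3,4)] ideal_add[OF Kid h(5,6)]])
      have eq: "p + q + (p' + q') = (p + p') + (q + q')" by (simp add: algebra_simps)
      show "x + y \<in> S" unfolding h(1,2) eq by (rule m)
    next
      fix r x assume "x \<in> S"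
      then obtain p q where h: "x = p + q" "p \<in> In Dt x1 n" "q \<in> K n" unfolding S_def by blast
      have m: "r * p + r * q \<in> S"
        by (rule Smem[OF ideal_mult[OF Iid h(2)] ideal_mult[OF Kid h(3)]])
      have eq: "r * (p + q) = r * p + r * q" by (simp add: algebra_simps)
      show "r * x \<in> S" unfolding h(1) eq by (rule m)
    qed
    moreover have "G (Suc n) \<subseteq> S"
    proof
      fix g assume "g \<in> G (Suc n)"
      then obtain w where w: "g = dword Dt w (PVar x1)" "length w \<le> Suc n" by (auto simp: G_def)
      show "g \<in> S"
      proof (cases "length w \<le> n")
        case True
        then have "g \<in> G n" using w by (auto simp: G_def)
        then have "g \<in> In Dt x1 n" unfolding I_def using ideal_gen_sub by blast
        then have "g + 0 \<in> S" by (rule Smem[OF _ ideal_0[OF Kid]])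
        then show ?thesis by simp
      next
        case False
        then have "w \<noteq> []" by auto
        then obtain w' a where wa: "w = w' @ [a]" by (metis rev_exhaust)
        then have "length w' \<le> n" using w by simp
        then have "dword Dt w' (PVar x1) \<in> G n" by (auto simp: G_def)
        then have "dword Dt w' (PVar x1) \<in> In Dt x1 n" unfolding I_def
          using ideal_gen_sub by blast
        then have "Dt a (dword Dt w' (PVar x1)) \<in> (\<Union>a. Dt a ` In Dt x1 n)" by blast
        then have "Dt a (dword Dt w' (PVar x1)) \<in> K n" unfolding K_def
          by (rule subsetD[OF ideal_gen_sub])
        moreover have "g = Dt a (dword Dt w' (PVar x1))" using w(1) wa dword_snoc by simp
        ultimately have "g \<in> K n" by simp
        then have "0 + g \<in> S" by (rule Smem[OF ideal_0[OF Iid]])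
        then show ?thesis by simp
      qed
    qed
    ultimately have "In Dt x1 (Suc n) \<subseteq> S" unfolding I_def by (rule ideal_gen_least)
    then show "In Dt x1 (Suc n) \<subseteq> {p + q | p q. p \<in> In Dt x1 n \<and> q \<in> K n}"
      unfolding S_def .
  qed
  have stab: "In Dt x1 n = In Dt x1 (n + m)" if h: "In Dt x1 n = In Dt x1 (Suc n)" for n m
  proof (induction m)
    case 0 then show ?case by simp
  next
    case (Suc m)
    have "In Dt x1 (n + Suc m) = In Dt x1 (Suc (n + m))" by simp
    also have "\<dots> = {p + q | p q. p \<in> In Dt x1 (n + m) \<and> q \<in> K (n + m)}" by (rule sum)
    also have "\<dots> = {p + q | p q. p \<in> In Dt x1 n \<and> q \<in> K n}" using Suc by (simp add: K_def)
    also have "\<dots> = In Dt x1 (Suc n)" by (rule sum[symmetric])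
    finally show ?case using h by simp
  qed
  show ?thesis using mono step sum stab unfolding K_def by blast
qed

end
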